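(* The lattice of characteristic subgroups of a finite abelian group $G$ is a chain if and only if $G\cong Z_{p^k}^{\mu_1}\times Z_{p^{k+1}}^{\mu_2}$ for some integers $k,\mu_1,\mu_2\ge 0$ and some prime $p$.
   Context: $Z_{p^a}^{\mu}$ denotes the direct product of $\mu$ copies of the cyclic group of order $p^a$. A lattice is a chain if any two of its elements are comparable. *)

theory Defs
  imports "HOL-Algebra.Algebra" "HOL-Computational_Algebra.Primes"
begin

definition characteristic_subgroup :: "'a set \<Rightarrow> ('a, 'b) monoid_scheme \<Rightarrow> bool" where
  "characteristic_subgroup H G \<longleftrightarrow>
     subgroup H G \<and> (\<forall>\<phi> \<in> Group.iso G G. \<phi> ` H = H)"

definition char_subgroups_chain :: "('a, 'b) monoid_scheme \<Rightarrow> bool" where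
  "char_subgroups_chain G \<longleftrightarrow>
     (\<forall>H K. characteristic_subgroup H G \<longrightarrow> characteristic_subgroup K G \<longrightarrow> H \<subseteq> K \<or> K \<subseteq> H)"

definition cyclic_power :: "nat \<Rightarrow> nat \<Rightarrow> (nat \<Rightarrow> int) monoid" where
  "cyclic_power n \<mu> = product_group {..<\<mu>} (\<lambda>_. integer_mod_group n)"

end

theory Submission
  imports Defs
begin

lemma char_iso_image:
  assumes G: "group G" and H: "group H" and f: "f \<in> iso G H"
    and S: "characteristic_subgroup S G"
  shows "characteristic_subgroup (f ` S) H"
proof -
  have sub: "subgroup S G" using S by (simp add: characteristic_subgroup_def)
  have inv: "\<And>\<phi>. \<phi> \<in> iso G G \<Longrightarrow> \<phi> ` S = S" using S by (simp add: characteristic_subgroup_def)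
  have "subgroup (f ` S) H" using subgroup.iso_subgroup[OF sub G H f] .
  moreover have "\<psi> ` (f ` S) = f ` S" if psi: "\<psi> \<in> iso H H" for \<psi>
  proof -
    define g where "g = inv_into (carrier G) f"
    have g: "g \<in> iso H G" unfolding g_def using group.iso_set_sym[OF G f] .
    have chi: "g \<circ> (\<psi> \<circ> f) \<in> iso G G"
      using iso_set_trans[OF iso_set_trans[OF f psi] g] .
    have S1: "(g \<circ> (\<psi> \<circ> f)) ` S = S" using inv[OF chi] .
    have Sc: "S \<subseteq> carrier G" using sub subgroup.subset by blast
    have fg: "\<And>y. y \<in> carrier H \<Longrightarrow> f (g y) = y"
    proof -
      have "bij_betw f (carrier G) (carrier H)" using f by (simp add: iso_def)
      then show "\<And>y. y \<in> carrier H \<Longrightarrow> f (g y) = y" unfolding g_def by (simp add: bij_betw_inv_into_right)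
    qed
    have psiC: "\<And>y. y \<in> carrier H \<Longrightarrow> \<psi> y \<in> carrier H"
      using psi unfolding iso_def hom_def by blast
    have fC: "\<And>x. x \<in> carrier G \<Longrightarrow> f x \<in> carrier H"
      using f unfolding iso_def hom_def by blast
    have eq: "\<And>x. x \<in> S \<Longrightarrow> (f \<circ> (g \<circ> (\<psi> \<circ> f))) x = (\<psi> \<circ> f) x"
      using Sc fg psiC fC by (simp add: subset_iff)
    have "f ` ((g \<circ> (\<psi> \<circ> f)) ` S) = \<psi> ` (f ` S)"
      using image_cong[OF refl eq] by (simp add: image_comp)
    then show ?thesis using S1 by simp
  qed
  ultimately show ?thesis by (simp add: characteristic_subgroup_def)
qed

lemma chain_iso:
  assumes G: "group G" and H: "group H" and iso: "G \<cong> H" and ch: "char_subgroups_chain H"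
  shows "char_subgroups_chain G"
  unfolding char_subgroups_chain_def
proof (intro allI impI)
  fix S K assume S: "characteristic_subgroup S G" and K: "characteristic_subgroup K G"
  obtain f where f: "f \<in> iso G H" using iso by (auto simp: is_iso_def)
  have "f ` S \<subseteq> f ` K \<or> f ` K \<subseteq> f ` S"
    using ch char_iso_image[OF G H f S] char_iso_image[OF G H f K]
    by (simp add: char_subgroups_chain_def)
  moreover have inj: "inj_on f (carrier G)" using f by (simp add: iso_iff)
  moreover have "S \<subseteq> carrier G" "K \<subseteq> carrier G"
    using S K by (auto simp: characteristic_subgroup_def dest: subgroup.subset)
  ultimately show "S \<subseteq> K \<or> K \<subseteq> S"
  proof -
    have imp: "A \<subseteq> B" if "f ` A \<subseteq> f ` B" "A \<subseteq> carrier G" "B \<subseteq> carrier G" for A B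
    proof
      fix x assume "x \<in> A"
      then have "f x \<in> f ` B" using that by auto
      then show "x \<in> B" using inj_on_image_mem_iff[OF inj] \<open>x \<in> A\<close> that by blast
    qed
    show ?thesis using imp \<open>f ` S \<subseteq> f ` K \<or> f ` K \<subseteq> f ` S\<close> \<open>S \<subseteq> carrier G\<close> \<open>K \<subseteq> carrier G\<close> by blast
  qed
qed

lemma chain_iso_iff:
  assumes G: "group G" and H: "group H" and iso: "G \<cong> H"
  shows "char_subgroups_chain G \<longleftrightarrow> char_subgroups_chain H"
proof
  show "char_subgroups_chain H \<Longrightarrow> char_subgroups_chain G" using chain_iso[OF G H iso] .
  have "H \<cong> G" using group.iso_sym[OF G iso] .
  then show "char_subgroups_chain G \<Longrightarrow> char_subgroups_chain H" using chain_iso[OF H G] by blast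
qed

lemma (in comm_group) char_kernel_pow:
  shows "characteristic_subgroup {x \<in> carrier G. x [^] (m::nat) = \<one>} G"
proof -
  let ?S = "{x \<in> carrier G. x [^] m = \<one>}"
  have "subgroup ?S G"
  proof (rule subgroupI)
    show "?S \<subseteq> carrier G" by auto
    show "?S \<noteq> {}" using one_closed by (metis (mono_tags, lifting) empty_iff mem_Collect_eq nat_pow_one)
    show "inv a \<in> ?S" if "a \<in> ?S" for a
      using that by (simp add: nat_pow_inv)
    show "a \<otimes> b \<in> ?S" if "a \<in> ?S" "b \<in> ?S" for a b
      using that by (simp add: pow_mult_distrib m_comm)
  qed
  moreover have "\<phi> ` ?S = ?S" if phi: "\<phi> \<in> iso G G" for \<phi>
  proof -
    have hom: "\<phi> \<in> hom G G" and inj: "inj_on \<phi> (carrier G)" and surj: "\<phi> ` carrier G = carrier G"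
      using phi by (auto simp: iso_iff)
    have pw: "\<And>x. x \<in> carrier G \<Longrightarrow> \<phi> (x [^] m) = \<phi> x [^] m"
      using hom_nat_pow[OF hom] is_group by blast
    have one: "\<phi> \<one> = \<one>" using hom by (simp add: hom_one[OF hom] group_hom.hom_one group_hom_axioms_def group_hom_def is_group)
    show ?thesis
    proof
      show "\<phi> ` ?S \<subseteq> ?S"
      proof
        fix y assume "y \<in> \<phi> ` ?S"
        then obtain x where x: "x \<in> carrier G" "x [^] m = \<one>" "y = \<phi> x" by auto
        have "\<phi> x \<in> carrier G" using hom x by (auto simp: hom_def)
        moreover have "\<phi> x [^] m = \<one>" using pw[OF x(1)] x one by simp
        ultimately show "y \<in> ?S" using x by simp
      qed
      show "?S \<subseteq> \<phi> ` ?S"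
      proof
        fix y assume y: "y \<in> ?S"
        then obtain x where x: "x \<in> carrier G" "y = \<phi> x" using surj by auto
        have "\<phi> (x [^] m) = \<phi> \<one>" using y x pw one by simp
        then have "x [^] m = \<one>" using inj x by (meson inj_onD nat_pow_closed one_closed)
        then show "y \<in> \<phi> ` ?S" using x by auto
      qed
    qed
  qed
  ultimately show ?thesis by (simp add: characteristic_subgroup_def)
qed

lemma (in comm_group) char_image_pow:
  shows "characteristic_subgroup ((\<lambda>x. x [^] (m::nat)) ` carrier G) G"
proof -
  let ?S = "(\<lambda>x. x [^] m) ` carrier G"
  have "subgroup ?S G"
  proof (rule subgroupI)
    show "?S \<subseteq> carrier G" by auto
    show "?S \<noteq> {}" by auto
    show "inv a \<in> ?S" if "a \<in> ?S" for a
      using that by (auto simp: nat_pow_inv intro!: image_eqI[where x="inv _"])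
    show "a \<otimes> b \<in> ?S" if ab: "a \<in> ?S" "b \<in> ?S" for a b
    proof -
      obtain x y where "x \<in> carrier G" "y \<in> carrier G" "a = x [^] m" "b = y [^] m" using ab by auto
      then show ?thesis by (auto simp: pow_mult_distrib m_comm intro!: image_eqI[where x="x \<otimes> y"])
    qed
  qed
  moreover have "\<phi> ` ?S = ?S" if phi: "\<phi> \<in> iso G G" for \<phi>
  proof -
    have hom: "\<phi> \<in> hom G G" and surj: "\<phi> ` carrier G = carrier G"
      using phi by (auto simp: iso_iff)
    have pw: "\<And>x. x \<in> carrier G \<Longrightarrow> \<phi> (x [^] m) = \<phi> x [^] m"
      using hom_nat_pow[OF hom] is_group by blast
    have "\<phi> ` ?S = (\<lambda>x. x [^] m) ` (\<phi> ` carrier G)"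
      by (auto simp: pw image_iff)
    then show ?thesis using surj by simp
  qed
  ultimately show ?thesis by (simp add: characteristic_subgroup_def)
qed

lemma product_group_cong:
  assumes "\<And>i. i \<in> I \<Longrightarrow> G i = G' i"
  shows "product_group I G = product_group I G'"
proof -
  have "(\<Pi>\<^sub>E i\<in>I. carrier (G i)) = (\<Pi>\<^sub>E i\<in>I. carrier (G' i))"
    by (rule PiE_cong) (simp add: assms)
  moreover have "(\<lambda>x y. \<lambda>i\<in>I. x i \<otimes>\<^bsub>G i\<^esub> y i) = (\<lambda>x y. \<lambda>i\<in>I. x i \<otimes>\<^bsub>G' i\<^esub> y i)"
    using assms by (intro ext restrict_ext) simp
  moreover have "(\<lambda>i\<in>I. \<one>\<^bsub>G i\<^esub>) = (\<lambda>i\<in>I. \<one>\<^bsub>G' i\<^esub>)"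
    using assms by (intro restrict_ext) simp
  ultimately show ?thesis unfolding product_group_def by simp
qed

lemma product_group_reindex:
  fixes G :: "'a \<Rightarrow> ('c, 'd) monoid_scheme" and \<sigma> :: "'b \<Rightarrow> 'a"
  assumes bij: "bij_betw \<sigma> J I"
  shows "product_group I G \<cong> product_group J (\<lambda>j. G (\<sigma> j))"
proof -
  define f :: "('a \<Rightarrow> 'c) \<Rightarrow> 'b \<Rightarrow> 'c" where "f = (\<lambda>x. \<lambda>j\<in>J. x (\<sigma> j))"
  define g :: "('b \<Rightarrow> 'c) \<Rightarrow> 'a \<Rightarrow> 'c" where "g = (\<lambda>y. \<lambda>i\<in>I. y (the_inv_into J \<sigma> i))"
  have s1: "\<And>j. j \<in> J \<Longrightarrow> \<sigma> j \<in> I" using bij by (simp add: bij_betw_apply)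
  have s2: "\<And>i. i \<in> I \<Longrightarrow> the_inv_into J \<sigma> i \<in> J"
    using bij by (simp add: bij_betw_def the_inv_into_into)
  have s3: "\<And>i. i \<in> I \<Longrightarrow> \<sigma> (the_inv_into J \<sigma> i) = i"
    using bij by (simp add: bij_betw_def f_the_inv_into_f)
  have s4: "\<And>j. j \<in> J \<Longrightarrow> the_inv_into J \<sigma> (\<sigma> j) = j"
    using bij by (simp add: bij_betw_def the_inv_into_f_f)
  have "group_isomorphisms (product_group I G) (product_group J (\<lambda>j. G (\<sigma> j))) f g"
    unfolding group_isomorphisms_def
  proof (intro conjI ballI)
    show "f \<in> hom (product_group I G) (product_group J (\<lambda>j. G (\<sigma> j)))"
    proof (rule homI)
      fix x assume "x \<in> carrier (product_group I G)"
      then show "f x \<in> carrier (product_group J (\<lambda>j. G (\<sigma> j)))"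
        by (simp add: f_def PiE_iff s1)
    next
      fix x y assume "x \<in> carrier (product_group I G)" "y \<in> carrier (product_group I G)"
      show "f (x \<otimes>\<^bsub>product_group I G\<^esub> y) = f x \<otimes>\<^bsub>product_group J (\<lambda>j. G (\<sigma> j))\<^esub> f y"
        by (simp add: f_def s1 cong: restrict_cong)
    qed
    show "g \<in> hom (product_group J (\<lambda>j. G (\<sigma> j))) (product_group I G)"
    proof (rule homI)
      fix x assume x: "x \<in> carrier (product_group J (\<lambda>j. G (\<sigma> j)))"
      have "x (the_inv_into J \<sigma> i) \<in> carrier (G i)" if "i \<in> I" for i
      proof -
        have "x (the_inv_into J \<sigma> i) \<in> carrier (G (\<sigma> (the_inv_into J \<sigma> i)))"
          using x s2[OF that] by (simp add: PiE_iff)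
        then show ?thesis using s3[OF that] by simp
      qed
      then show "g x \<in> carrier (product_group I G)"
        by (simp add: g_def)
    next
      fix x y assume "x \<in> carrier (product_group J (\<lambda>j. G (\<sigma> j)))" "y \<in> carrier (product_group J (\<lambda>j. G (\<sigma> j)))"
      show "g (x \<otimes>\<^bsub>product_group J (\<lambda>j. G (\<sigma> j))\<^esub> y) = g x \<otimes>\<^bsub>product_group I G\<^esub> g y"
        by (simp add: g_def s2 s3 cong: restrict_cong)
    qed
    show "g (f x) = x" if "x \<in> carrier (product_group I G)" for x
      using that by (auto simp: f_def g_def PiE_iff s2 s3 extensional_def fun_eq_iff)
    show "f (g y) = y" if "y \<in> carrier (product_group J (\<lambda>j. G (\<sigma> j)))" for y
      using that by (auto simp: f_def g_def PiE_iff s1 s4 extensional_def fun_eq_iff)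
  qed
  then show ?thesis using group_isomorphisms_imp_iso is_isoI by blast
qed


lemma product_group_union:
  fixes G :: "'a \<Rightarrow> ('c, 'd) monoid_scheme"
  assumes disj: "I \<inter> J = {}"
  shows "product_group (I \<union> J) G \<cong> product_group I G \<times>\<times> product_group J G"
proof -
  define f :: "('a \<Rightarrow> 'c) \<Rightarrow> ('a \<Rightarrow> 'c) \<times> ('a \<Rightarrow> 'c)" where "f = (\<lambda>x. (restrict x I, restrict x J))"
  define g :: "('a \<Rightarrow> 'c) \<times> ('a \<Rightarrow> 'c) \<Rightarrow> 'a \<Rightarrow> 'c"
    where "g = (\<lambda>(a,b). \<lambda>i\<in>I \<union> J. if i \<in> I then a i else b i)"
  have "group_isomorphisms (product_group (I \<union> J) G) (product_group I G \<times>\<times> product_group J G) f g"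
    unfolding group_isomorphisms_def
  proof (intro conjI ballI)
    show "f \<in> hom (product_group (I \<union> J) G) (product_group I G \<times>\<times> product_group J G)"
    proof (rule homI)
      fix x assume "x \<in> carrier (product_group (I \<union> J) G)"
      then show "f x \<in> carrier (product_group I G \<times>\<times> product_group J G)"
        by (simp add: f_def PiE_iff)
    next
      fix x y assume "x \<in> carrier (product_group (I \<union> J) G)" "y \<in> carrier (product_group (I \<union> J) G)"
      show "f (x \<otimes>\<^bsub>product_group (I \<union> J) G\<^esub> y) = f x \<otimes>\<^bsub>product_group I G \<times>\<times> product_group J G\<^esub> f y"
        by (simp add: f_def cong: restrict_cong)
    qed
    show "g \<in> hom (product_group I G \<times>\<times> product_group J G) (product_group (I \<union> J) G)"
    proof (rule homI)
      fix x assume x: "x \<in> carrier (product_group I G \<times>\<times> product_group J G)"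
      then show "g x \<in> carrier (product_group (I \<union> J) G)"
        by (cases x) (auto simp: g_def PiE_iff)
    next
      fix x y assume x: "x \<in> carrier (product_group I G \<times>\<times> product_group J G)"
        and y: "y \<in> carrier (product_group I G \<times>\<times> product_group J G)"
      obtain a b where ab: "x = (a,b)" by (cases x)
      obtain c d where cd: "y = (c,d)" by (cases y)
      show "g (x \<otimes>\<^bsub>product_group I G \<times>\<times> product_group J G\<^esub> y) = g x \<otimes>\<^bsub>product_group (I \<union> J) G\<^esub> g y"
        using disj by (auto simp: g_def ab cd fun_eq_iff)
    qed
    show "g (f x) = x" if "x \<in> carrier (product_group (I \<union> J) G)" for x
      using that by (auto simp: f_def g_def PiE_iff extensional_def fun_eq_iff)
    show "f (g y) = y" if "y \<in> carrier (product_group I G \<times>\<times> product_group J G)" for y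
      using that disj by (cases y) (auto simp: f_def g_def PiE_iff extensional_def fun_eq_iff)
  qed
  then show ?thesis using group_isomorphisms_imp_iso is_isoI by blast
qed

lemma product_group_singleton:
  fixes G :: "'a \<Rightarrow> ('c, 'd) monoid_scheme"
  shows "product_group {i} G \<cong> G i"
proof -
  define f :: "('a \<Rightarrow> 'c) \<Rightarrow> 'c" where "f = (\<lambda>x. x i)"
  define g :: "'c \<Rightarrow> 'a \<Rightarrow> 'c" where "g = (\<lambda>a. \<lambda>j\<in>{i}. a)"
  have "group_isomorphisms (product_group {i} G) (G i) f g"
    unfolding group_isomorphisms_def
    by (auto simp: f_def g_def hom_def PiE_iff extensional_def fun_eq_iff)
  then show ?thesis using group_isomorphisms_imp_iso is_isoI by blast
qed

definition Pg :: "nat \<Rightarrow> nat \<Rightarrow> (nat \<Rightarrow> nat) \<Rightarrow> (nat \<Rightarrow> int) monoid" where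
  "Pg p n e = product_group {..<n} (\<lambda>i. integer_mod_group (p ^ e i))"

lemma carrier_Pg:
  assumes "p > 0"
  shows "carrier (Pg p n e) = (\<Pi>\<^sub>E i\<in>{..<n}. {0..<int p ^ e i})"
  using assms by (simp add: Pg_def carrier_integer_mod_group)

lemma mult_Pg: "x \<otimes>\<^bsub>Pg p n e\<^esub> y = (\<lambda>i\<in>{..<n}. (x i + y i) mod (int p ^ e i))"
  by (simp add: Pg_def)

lemma one_Pg: "\<one>\<^bsub>Pg p n e\<^esub> = (\<lambda>i\<in>{..<n}. 0)"
  by (simp add: Pg_def)

lemma group_Pg: "group (Pg p n e)"
  by (simp add: Pg_def)

lemma comm_group_Pg: "comm_group (Pg p n e)"
proof -
  interpret group "Pg p n e" by (rule group_Pg)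
  show ?thesis
    by (rule group_comm_groupI) (simp add: mult_Pg add.commute)
qed

lemma pow_Pg:
  assumes "x \<in> carrier (Pg p n e)"
  shows "x [^]\<^bsub>Pg p n e\<^esub> (m::nat) = (\<lambda>i\<in>{..<n}. (int m * x i) mod (int p ^ e i))"
proof (induction m)
  case 0
  then show ?case by (simp add: one_Pg)
next
  case (Suc m)
  have "x [^]\<^bsub>Pg p n e\<^esub> Suc m = x [^]\<^bsub>Pg p n e\<^esub> m \<otimes>\<^bsub>Pg p n e\<^esub> x" by simp
  also have "\<dots> = (\<lambda>i\<in>{..<n}. (int (Suc m) * x i) mod (int p ^ e i))"
    unfolding Suc mult_Pg
    by (intro restrict_ext) (simp add: mod_add_right_eq algebra_simps)
  finally show ?case .
qed

definition sg :: "nat \<Rightarrow> nat \<Rightarrow> (nat \<Rightarrow> nat) \<Rightarrow> nat \<Rightarrow> int \<Rightarrow> (nat \<Rightarrow> int)" where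
  "sg p n e j c = (\<lambda>i\<in>{..<n}. if i = j then c mod (int p ^ e j) else 0)"

lemma sg_carrier: "p > 0 \<Longrightarrow> sg p n e j c \<in> carrier (Pg p n e)"
  by (auto simp: sg_def carrier_Pg)

lemma sg_pow: "p > 0 \<Longrightarrow> sg p n e j c [^]\<^bsub>Pg p n e\<^esub> (m::nat) = sg p n e j (int m * c)"
  by (simp add: pow_Pg sg_carrier) (auto simp: sg_def mod_mult_right_eq)

lemma sg_mod: "sg p n e j (c mod (int p ^ e j)) = sg p n e j c"
  unfolding sg_def by (intro restrict_ext) simp

lemma sg_cong: "c mod (int p ^ e j) = d mod (int p ^ e j) \<Longrightarrow> sg p n e j c = sg p n e j d"
  unfolding sg_def by (intro restrict_ext) simp

lemma mult_mod_dvd: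
  fixes s b M N :: int
  assumes "N dvd s * M"
  shows "(s * (b mod M)) mod N = (s * b) mod N"
proof -
  obtain k where k: "s * M = N * k" using assms by (auto simp: dvd_def)
  have e: "s * b = s * (b mod M) + (s * M) * (b div M)"
  proof -
    have "s * (b div M * M + b mod M) = s * (b mod M) + (s * M) * (b div M)" by (simp only: distrib_left mult.commute mult.left_commute add.commute)
    then show ?thesis by simp
  qed
  have "s * b = s * (b mod M) + N * (k * (b div M))"
    using e k by (simp add: mult.assoc)
  then show ?thesis by simp
qed

lemma key_pt:
  fixes a b c d s M N :: int
  assumes dv: "N dvd s * M"
  shows "((a + b) mod N + s * ((c + d) mod M)) mod N = ((a + s * c) mod N + (b + s * d) mod N) mod N"
proof -
  have "((a + b) mod N + s * ((c + d) mod M)) mod N = ((a + b) + s * ((c + d) mod M)) mod N"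
    by (simp add: mod_add_left_eq)
  also have "\<dots> = ((a + b) + (s * ((c + d) mod M)) mod N) mod N"
    by (simp add: mod_add_right_eq)
  also have "\<dots> = ((a + b) + (s * (c + d)) mod N) mod N"
    by (simp only: mult_mod_dvd[OF dv])
  also have "\<dots> = ((a + b) + s * (c + d)) mod N"
    by (simp add: mod_add_right_eq)
  also have "\<dots> = ((a + s * c) + (b + s * d)) mod N"
    by (simp add: algebra_simps)
  also have "\<dots> = ((a + s * c) mod N + (b + s * d) mod N) mod N"
    by (simp add: mod_add_eq)
  finally show ?thesis .
qed

lemma pow_shift_dvd: "int p ^ ej dvd int p ^ (ej - ei) * int p ^ ei"
proof -
  have "int p ^ (ej - ei) * int p ^ ei = int p ^ (ej - ei + ei)" by (simp add: power_add)
  moreover have "int p ^ ej dvd int p ^ (ej - ei + ei)" by (rule le_imp_power_dvd) simp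
  ultimately show ?thesis by simp
qed

lemma pow_shift_dvd': "int p ^ ej dvd (q * int p ^ (ej - ei)) * int p ^ ei"
  using pow_shift_dvd[of p ej ei] by (simp add: mult.assoc)

definition phi :: "nat \<Rightarrow> nat \<Rightarrow> (nat\<Rightarrow>nat) \<Rightarrow> nat \<Rightarrow> (nat \<Rightarrow> int) \<Rightarrow> (nat \<Rightarrow> int) \<Rightarrow> (nat \<Rightarrow> int)" where
 "phi p n e i0 q y = (\<lambda>j\<in>{..<n}. if j = i0 then y j
      else (y j + (q j * int p ^ (e j - e i0)) * y i0) mod (int p ^ e j))"

lemma phi_carrier:
  assumes p: "p > 0" and i0: "i0 < n" and y: "y \<in> carrier (Pg p n e)"
  shows "phi p n e i0 q y \<in> carrier (Pg p n e)"
  using y p by (auto simp: phi_def carrier_Pg PiE_iff)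

lemma phi_hom:
  assumes p: "p > 0" and i0: "i0 < n"
  shows "phi p n e i0 q \<in> hom (Pg p n e) (Pg p n e)"
proof (rule homI)
  fix x assume "x \<in> carrier (Pg p n e)"
  then show "phi p n e i0 q x \<in> carrier (Pg p n e)" using phi_carrier p i0 by blast
next
  fix x y assume x: "x \<in> carrier (Pg p n e)" and y: "y \<in> carrier (Pg p n e)"
  show "phi p n e i0 q (x \<otimes>\<^bsub>Pg p n e\<^esub> y) = phi p n e i0 q x \<otimes>\<^bsub>Pg p n e\<^esub> phi p n e i0 q y"
    unfolding mult_Pg phi_def
    using i0 key_pt[OF pow_shift_dvd'] by (intro restrict_ext) auto
qed


lemma phi_inv:
  assumes p: "p > 0" and i0: "i0 < n" and y: "y \<in> carrier (Pg p n e)"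
  shows "phi p n e i0 (\<lambda>j. - q j) (phi p n e i0 q y) = y"
proof -
  have yr: "\<And>j. j < n \<Longrightarrow> 0 \<le> y j \<and> y j < int p ^ e j" and ye: "y \<in> extensional {..<n}"
    using y p by (auto simp: carrier_Pg PiE_iff)
  have pt: "((a + s * c) mod N + (- s) * c) mod N = a mod N" for a s c N :: int
    by (simp add: mod_diff_left_eq)
  show ?thesis
  proof (rule extensionalityI[OF _ ye])
    show "phi p n e i0 (\<lambda>j. - q j) (phi p n e i0 q y) \<in> extensional {..<n}"
      by (simp add: phi_def)
    fix j assume j: "j \<in> {..<n}"
    show "phi p n e i0 (\<lambda>j. - q j) (phi p n e i0 q y) j = y j"
    proof (cases "j = i0")
      case True then show ?thesis using j by (simp add: phi_def)
    next
      case False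
      then have "phi p n e i0 (\<lambda>j. - q j) (phi p n e i0 q y) j
          = ((y j + (q j * int p ^ (e j - e i0)) * y i0) mod int p ^ e j + (- (q j * int p ^ (e j - e i0))) * y i0) mod int p ^ e j"
        using j i0 by (simp add: phi_def)
      also have "\<dots> = y j mod int p ^ e j" by (rule pt)
      also have "\<dots> = y j" using yr j by simp
      finally show ?thesis .
    qed
  qed
qed

lemma phi_iso:
  assumes p: "p > 0" and i0: "i0 < n"
  shows "phi p n e i0 q \<in> iso (Pg p n e) (Pg p n e)"
proof -
  have "group_isomorphisms (Pg p n e) (Pg p n e) (phi p n e i0 q) (phi p n e i0 (\<lambda>j. - q j))"
    unfolding group_isomorphisms_def
    using phi_hom[OF p i0] phi_inv[OF p i0] phi_inv[OF p i0, where q="\<lambda>j. - q j"] by simp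
  then show ?thesis by (rule group_isomorphisms_imp_iso)
qed

lemma inv_mod_exists:
  fixes u :: int
  assumes p: "Factorial_Ring.prime p" and nd: "\<not> int p dvd u"
  shows "\<exists>u'. u' \<ge> 0 \<and> int p ^ m dvd u * u' - 1"
proof -
  have pi: "Factorial_Ring.prime (int p)" using p by simp
  have "coprime (int p) u" using prime_imp_coprime[OF pi nd] .
  then have "coprime u (int p ^ m)" by (simp add: coprime_commute)
  then have g: "gcd u (int p ^ m) = 1" by simp
  obtain a b where ab: "a * u + b * int p ^ m = 1" using bezout_int[of u "int p ^ m"] g by auto
  define u' where "u' = a mod int p ^ m"
  have pos: "int p ^ m > 0" using p prime_gt_0_nat by simp
  have "u' \<ge> 0" using pos by (simp add: u'_def)
  moreover have "(u * u' - 1) mod int p ^ m = 0"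
  proof -
    have "(u * u' - 1) mod int p ^ m = (u * a - 1) mod int p ^ m"
      unfolding u'_def by (metis mod_diff_left_eq mod_mult_right_eq)
    also have "u * a - 1 = int p ^ m * (- b)" using ab by (simp add: algebra_simps)
    finally show ?thesis by simp
  qed
  ultimately show ?thesis by (auto simp: dvd_eq_mod_eq_0)
qed

lemma subgroup_nat_pow_closed:
  assumes "subgroup H G" "h \<in> H" shows "h [^]\<^bsub>G\<^esub> (m::nat) \<in> H"
proof (induction m)
  case 0 then show ?case using subgroup.one_closed[OF assms(1)] by simp
next
  case (Suc m) then show ?case using subgroup.m_closed[OF assms(1)] assms(2) by simp
qed

lemma (in group) inv_cancel_l: "a \<in> carrier G \<Longrightarrow> b \<in> carrier G \<Longrightarrow> inv a \<otimes> (a \<otimes> b) = b"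
  by (simp add: m_assoc[symmetric])

definition aa :: "nat \<Rightarrow> nat \<Rightarrow> nat" where "aa k ei = (if ei = k then 1 else 0)"
definition dd :: "nat \<Rightarrow> (nat \<Rightarrow> nat) \<Rightarrow> nat \<Rightarrow> nat \<Rightarrow> nat" where
  "dd k e t i = (t + 1 - aa k (e i)) div 2"
definition DD :: "nat \<Rightarrow> nat \<Rightarrow> (nat \<Rightarrow> nat) \<Rightarrow> nat \<Rightarrow> nat \<Rightarrow> (nat \<Rightarrow> int) set" where
  "DD p n e k t = {x \<in> carrier (Pg p n e). \<forall>i<n. int p ^ dd k e t i dvd x i}"

lemma dd_mono: "t \<le> t' \<Longrightarrow> dd k e t i \<le> dd k e t' i"
  unfolding dd_def by (intro div_le_mono) simp

lemma DD_anti: assumes "t \<le> t'" shows "DD p n e k t' \<subseteq> DD p n e k t"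
proof
  fix x assume x: "x \<in> DD p n e k t'"
  then have "\<And>i. int p ^ dd k e t i dvd int p ^ dd k e t' i"
    using dd_mono assms by (intro le_imp_power_dvd) blast
  then show "x \<in> DD p n e k t" using x unfolding DD_def using dvd_trans by blast
qed

lemma DD_0: "DD p n e k 0 = carrier (Pg p n e)"
  unfolding DD_def dd_def aa_def by auto

lemma part_lemma:
  assumes p: "p > 0" and H: "subgroup H (Pg p n e)" and z: "z \<in> carrier (Pg p n e)"
    and sgH: "\<And>j. j < n \<Longrightarrow> sg p n e j (z j) \<in> H"
  shows "z \<in> H"
proof -
  define part where "part m = (\<lambda>i\<in>{..<n}. if i < m then z i else 0)" for m
  have zr: "\<And>j. j < n \<Longrightarrow> 0 \<le> z j \<and> z j < int p ^ e j" and ze: "z \<in> extensional {..<n}"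
    using z p by (auto simp: carrier_Pg PiE_iff)
  have "m \<le> n \<Longrightarrow> part m \<in> H" for m
  proof (induction m)
    case 0
    have "part 0 = \<one>\<^bsub>Pg p n e\<^esub>" by (simp add: part_def one_Pg)
    then show ?case using subgroup.one_closed[OF H] by simp
  next
    case (Suc m)
    have "part (Suc m) = part m \<otimes>\<^bsub>Pg p n e\<^esub> sg p n e m (z m)"
      unfolding mult_Pg part_def sg_def
      by (intro restrict_ext) (use zr Suc.prems in auto)
    then show ?case using Suc subgroup.m_closed[OF H] sgH by simp
  qed
  moreover have "part n = z" unfolding part_def using ze by (intro extensionalityI[OF _ ze]) auto
  ultimately show ?thesis by force
qed


lemma phi_sg_kill:
  assumes p: "p > 0" and i0: "i0 < n" and x: "x \<in> carrier (Pg p n e)"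
    and kill: "\<And>j. j < n \<Longrightarrow> j \<noteq> i0 \<Longrightarrow> (x j + (q j * int p ^ (e j - e i0)) * x i0) mod int p ^ e j = 0"
  shows "phi p n e i0 q x = sg p n e i0 (x i0)"
proof -
  have xr: "0 \<le> x i0 \<and> x i0 < int p ^ e i0" using x p i0 by (auto simp: carrier_Pg PiE_iff)
  show ?thesis unfolding phi_def sg_def
    by (intro restrict_ext) (use xr kill in auto)
qed

lemma phi_sg_transfer:
  assumes p: "p > 0" and i0: "i0 < n" and j: "j < n" "j \<noteq> i0"
  shows "phi p n e i0 (\<lambda>l. if l = j then 1 else 0) (sg p n e i0 c)
       = sg p n e i0 c \<otimes>\<^bsub>Pg p n e\<^esub> sg p n e j (int p ^ (e j - e i0) * c)"
proof -
  have m: "(int p ^ (e j - e i0) * (c mod int p ^ e i0)) mod int p ^ e j = (int p ^ (e j - e i0) * c) mod int p ^ e j"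
    by (rule mult_mod_dvd[OF pow_shift_dvd])
  show ?thesis unfolding phi_def sg_def mult_Pg
    by (intro restrict_ext) (use i0 j m in auto)
qed

context
  fixes p n :: nat and e :: "nat \<Rightarrow> nat" and k :: nat
  assumes p: "Factorial_Ring.prime p" and ek: "\<And>i. i < n \<Longrightarrow> e i = k \<or> e i = Suc k"
begin

lemma p0: "p > 0" using p prime_gt_0_nat by blast

lemma K_lemma:
  assumes H: "characteristic_subgroup H (Pg p n e)" and x: "x \<in> H"
    and xt: "x \<in> DD p n e k t" and xn: "x \<notin> DD p n e k (Suc t)"
  shows "DD p n e k t \<subseteq> H"
proof -
  let ?P = "Pg p n e"
  have sub: "subgroup H ?P" using H by (simp add: characteristic_subgroup_def)
  have inH: "\<And>\<phi> y. \<phi> \<in> iso ?P ?P \<Longrightarrow> y \<in> H \<Longrightarrow> \<phi> y \<in> H"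
    using H unfolding characteristic_subgroup_def by blast
  have xc: "x \<in> carrier ?P" using xt by (simp add: DD_def)
  have dvt: "\<And>i. i < n \<Longrightarrow> int p ^ dd k e t i dvd x i" using xt by (simp add: DD_def)
  obtain i0 where i0: "i0 < n" and nd: "\<not> int p ^ dd k e (Suc t) i0 dvd x i0"
    using xn xc by (auto simp: DD_def)
  define v where "v = dd k e t i0"
  have a1: "aa k (e i0) \<le> 1" by (simp add: aa_def)
  have dsuc: "dd k e (Suc t) i0 = Suc v"
  proof -
    have "dd k e (Suc t) i0 \<noteq> v" using nd dvt[OF i0] v_def by auto
    then show ?thesis using a1 unfolding v_def dd_def by presburger
  qed
  have tv: "t = 2 * v + aa k (e i0)" using dsuc a1 unfolding v_def dd_def by presburger
  obtain u where u: "x i0 = int p ^ v * u" using dvt[OF i0] v_def by (auto simp: dvd_def)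
  have nu: "\<not> int p dvd u"
  proof
    assume "int p dvd u"
    then have "int p ^ Suc v dvd x i0" using u by (auto simp: dvd_def)
    then show False using nd dsuc by simp
  qed
  obtain u' where u'0: "u' \<ge> 0" and u': "int p ^ Suc k dvd u * u' - 1"
    using inv_mod_exists[OF p nu] by blast
  have Nk: "\<And>j. j < n \<Longrightarrow> int p ^ e j dvd int p ^ Suc k"
  proof -
    fix j assume "j < n"
    then have "e j \<le> Suc k" using ek by fastforce
    then show "int p ^ e j dvd int p ^ Suc k" by (rule le_imp_power_dvd)
  qed
  define s where "s j = e j - e i0" for j
  have vs: "\<And>j. j < n \<Longrightarrow> v + s j \<le> dd k e t j"
  proof -
    fix j assume j: "j < n"
    show "v + s j \<le> dd k e t j"
      using ek[OF j] ek[OF i0] tv unfolding s_def dd_def aa_def by (auto split: if_splits)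
  qed
  have xj: "int p ^ (v + s j) dvd x j" if j: "j < n" for j
  proof -
    have "int p ^ (v + s j) dvd int p ^ dd k e t j" using vs[OF j] by (rule le_imp_power_dvd)
    then show ?thesis using dvt[OF j] by (rule dvd_trans)
  qed
  define w where "w j = x j div int p ^ (v + s j)" for j
  have w: "\<And>j. j < n \<Longrightarrow> x j = int p ^ (v + s j) * w j"
    using xj unfolding w_def by simp
  define q where "q j = - w j * u'" for j
  have kill: "(x j + (q j * int p ^ (e j - e i0)) * x i0) mod int p ^ e j = 0" if j: "j < n" "j \<noteq> i0" for j
  proof -
    have "x j + (q j * int p ^ (e j - e i0)) * x i0 = - (int p ^ (v + s j) * w j) * (u * u' - 1)"
      using w[OF j(1)] u unfolding q_def s_def by (simp add: algebra_simps power_add)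
    moreover have "int p ^ e j dvd - (int p ^ (v + s j) * w j) * (u * u' - 1)"
      using dvd_trans[OF Nk[OF j(1)] u'] by simp
    ultimately show ?thesis by simp
  qed
  have step1: "sg p n e i0 (x i0) \<in> H"
  proof -
    have "phi p n e i0 q x \<in> H" using inH[OF phi_iso[OF p0 i0] x] .
    then show ?thesis using phi_sg_kill[OF p0 i0 xc kill] by simp
  qed
  have g0: "sg p n e i0 (int p ^ v) \<in> H"
  proof -
    have "sg p n e i0 (x i0) [^]\<^bsub>?P\<^esub> nat u' \<in> H"
      using step1 subgroup_nat_pow_closed[OF sub] by simp
    moreover have "sg p n e i0 (x i0) [^]\<^bsub>?P\<^esub> nat u' = sg p n e i0 (int p ^ v)"
    proof -
      have "sg p n e i0 (x i0) [^]\<^bsub>?P\<^esub> nat u' = sg p n e i0 (u' * x i0)"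
        using sg_pow[OF p0] u'0 by simp
      also have "\<dots> = sg p n e i0 (int p ^ v)"
      proof (rule sg_cong)
        have "int p ^ e i0 dvd int p ^ v * (u * u' - 1)"
          using dvd_trans[OF Nk[OF i0] u'] by simp
        then have "int p ^ e i0 dvd u' * x i0 - int p ^ v"
          using u by (simp add: algebra_simps)
        then show "(u' * x i0) mod int p ^ e i0 = (int p ^ v) mod int p ^ e i0"
          by (simp add: mod_eq_dvd_iff)
      qed
      finally show ?thesis .
    qed
    ultimately show ?thesis by simp
  qed
  have g: "sg p n e j (int p ^ (v + s j)) \<in> H" if j: "j < n" for j
  proof (cases "j = i0")
    case True then show ?thesis using g0 s_def by simp
  next
    case False
    let ?g = "sg p n e i0 (int p ^ v)" and ?z = "sg p n e j (int p ^ (e j - e i0) * int p ^ v)"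
    have gc: "?g \<in> carrier ?P" "?z \<in> carrier ?P" using sg_carrier[OF p0] by auto
    have "phi p n e i0 (\<lambda>l. if l = j then 1 else 0) ?g \<in> H"
      using inH[OF phi_iso[OF p0 i0] g0] .
    then have "?g \<otimes>\<^bsub>?P\<^esub> ?z \<in> H" using phi_sg_transfer[OF p0 i0 j False] by simp
    then have "inv\<^bsub>?P\<^esub> ?g \<otimes>\<^bsub>?P\<^esub> (?g \<otimes>\<^bsub>?P\<^esub> ?z) \<in> H"
      using g0 subgroup.m_closed[OF sub] subgroup.m_inv_closed[OF sub] by blast
    moreover have "inv\<^bsub>?P\<^esub> ?g \<otimes>\<^bsub>?P\<^esub> (?g \<otimes>\<^bsub>?P\<^esub> ?z) = ?z"
      using gc group.inv_cancel_l[OF group_Pg] by blast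
    ultimately show ?thesis by (simp add: s_def power_add mult.commute)
  qed
  show "DD p n e k t \<subseteq> H"
  proof
    fix z assume z: "z \<in> DD p n e k t"
    have zc: "z \<in> carrier ?P" using z by (simp add: DD_def)
    have zr: "\<And>j. j < n \<Longrightarrow> 0 \<le> z j" using zc p0 by (auto simp: carrier_Pg PiE_iff)
    show "z \<in> H"
    proof (rule part_lemma[OF p0 sub zc])
      fix j assume j: "j < n"
      have "int p ^ (v + s j) dvd int p ^ dd k e t j" using vs[OF j] by (rule le_imp_power_dvd)
      moreover have "int p ^ dd k e t j dvd z j" using z j unfolding DD_def by simp
      ultimately have "int p ^ (v + s j) dvd z j" by (rule dvd_trans)
      then obtain c where c: "z j = int p ^ (v + s j) * c" by (auto simp: dvd_def)
      have c0: "c \<ge> 0"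
      proof -
        have pos: "int p ^ (v + s j) > 0" using p0 by simp
        have "0 \<le> int p ^ (v + s j) * c" using zr[OF j] c by simp
        then show ?thesis using pos by (simp add: zero_le_mult_iff)
      qed
      have "sg p n e j (int p ^ (v + s j)) [^]\<^bsub>?P\<^esub> nat c \<in> H"
        using g[OF j] subgroup_nat_pow_closed[OF sub] by simp
      moreover have "sg p n e j (int p ^ (v + s j)) [^]\<^bsub>?P\<^esub> nat c = sg p n e j (int (nat c) * int p ^ (v + s j))"
        by (rule sg_pow[OF p0])
      moreover have "int (nat c) * int p ^ (v + s j) = z j" using c c0 by simp
      ultimately show "sg p n e j (z j) \<in> H" by simp
    qed
  qed
qed


lemma level_exists:
  assumes x: "x \<in> carrier (Pg p n e)" and x1: "x \<noteq> \<one>\<^bsub>Pg p n e\<^esub>"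
  shows "\<exists>t. x \<in> DD p n e k t \<and> x \<notin> DD p n e k (Suc t)"
proof -
  have xe: "x \<in> extensional {..<n}" and xr: "\<And>i. i < n \<Longrightarrow> 0 \<le> x i \<and> x i < int p ^ e i"
    using x p0 by (auto simp: carrier_Pg PiE_iff)
  obtain i where i: "i < n" "x i \<noteq> 0"
  proof -
    have "\<exists>i<n. x i \<noteq> 0"
    proof (rule ccontr)
      assume "\<not> (\<exists>i<n. x i \<noteq> 0)"
      then have "x = (\<lambda>i\<in>{..<n}. 0)" using xe by (intro extensionalityI[OF xe]) auto
      then show False using x1 by (simp add: one_Pg)
    qed
    then show ?thesis using that by blast
  qed
  define t0 where "t0 = 2 * e i + 2"
  have "e i + 1 \<le> dd k e t0 i" unfolding t0_def dd_def aa_def by auto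
  then have "int p ^ (e i + 1) dvd int p ^ dd k e t0 i" by (rule le_imp_power_dvd)
  have nt0: "x \<notin> DD p n e k t0"
  proof
    assume "x \<in> DD p n e k t0"
    then have "int p ^ dd k e t0 i dvd x i" using i unfolding DD_def by simp
    then have d: "int p ^ (e i + 1) dvd x i"
      using \<open>int p ^ (e i + 1) dvd int p ^ dd k e t0 i\<close> dvd_trans by blast
    have pos: "0 < x i" using xr[OF i(1)] i(2) by simp
    have "int p ^ (e i + 1) \<le> x i" using zdvd_imp_le[OF d pos] .
    moreover have "int p ^ e i \<le> int p ^ (e i + 1)" using p0 by (intro power_increasing) auto
    ultimately show False using xr[OF i(1)] by simp
  qed
  have ex: "\<exists>t. x \<notin> DD p n e k (Suc t)"
  proof (cases t0)
    case 0 then show ?thesis using nt0 x DD_0 by simp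
  next
    case (Suc t') then show ?thesis using nt0 by blast
  qed
  define t where "t = (LEAST t. x \<notin> DD p n e k (Suc t))"
  have t1: "x \<notin> DD p n e k (Suc t)" unfolding t_def using LeastI_ex[OF ex] .
  have t2: "x \<in> DD p n e k t"
  proof (cases t)
    case 0 then show ?thesis using x DD_0 by simp
  next
    case (Suc t')
    then have "t' < t" by simp
    then have "\<not> x \<notin> DD p n e k (Suc t')" unfolding t_def by (rule not_less_Least)
    then show ?thesis using Suc by simp
  qed
  show ?thesis using t1 t2 by blast
qed

lemma chain_Pg: "char_subgroups_chain (Pg p n e)"
  unfolding char_subgroups_chain_def
proof (intro allI impI)
  fix H K assume H: "characteristic_subgroup H (Pg p n e)" and K: "characteristic_subgroup K (Pg p n e)"
  let ?P = "Pg p n e"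
  show "H \<subseteq> K \<or> K \<subseteq> H"
  proof (rule ccontr)
    assume "\<not> (H \<subseteq> K \<or> K \<subseteq> H)"
    then obtain x y where x: "x \<in> H" "x \<notin> K" and y: "y \<in> K" "y \<notin> H" by blast
    have subH: "subgroup H ?P" and subK: "subgroup K ?P" using H K by (auto simp: characteristic_subgroup_def)
    have xc: "x \<in> carrier ?P" using x subgroup.mem_carrier[OF subH] by blast
    have yc: "y \<in> carrier ?P" using y subgroup.mem_carrier[OF subK] by blast
    have x1: "x \<noteq> \<one>\<^bsub>?P\<^esub>" using x subgroup.one_closed[OF subK] by auto
    have y1: "y \<noteq> \<one>\<^bsub>?P\<^esub>" using y subgroup.one_closed[OF subH] by auto
    obtain tx where tx: "x \<in> DD p n e k tx" "x \<notin> DD p n e k (Suc tx)" using level_exists[OF xc x1] by blast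
    obtain ty where ty: "y \<in> DD p n e k ty" "y \<notin> DD p n e k (Suc ty)" using level_exists[OF yc y1] by blast
    show False
    proof (cases "tx \<le> ty")
      case True
      have "y \<in> H" using K_lemma[OF H x(1) tx] DD_anti[OF True] ty(1) by blast
      then show False using y by simp
    next
      case False
      then have "ty \<le> tx" by simp
      have "x \<in> K" using K_lemma[OF K y(1) ty] DD_anti[OF \<open>ty \<le> tx\<close>] tx(1) by blast
      then show False using x by simp
    qed
  qed
qed

end

lemma product_const_reindex:
  fixes Z :: "('c, 'd) monoid_scheme"
  assumes "finite I"
  shows "product_group I (\<lambda>_. Z) \<cong> product_group {..<card I} (\<lambda>_. Z)"
proof -
  obtain h :: "nat \<Rightarrow> 'a" where h: "bij_betw h {0..<card I} I"
    using ex_bij_betw_nat_finite[OF assms] by blast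
  have "product_group I (\<lambda>_. Z) \<cong> product_group {0..<card I} (\<lambda>j. (\<lambda>_. Z) (h j))"
    by (rule product_group_reindex[OF h])
  then show ?thesis by (simp add: atLeast0LessThan)
qed

lemma Pg_split:
  assumes ek: "\<And>i. i < n \<Longrightarrow> e i = k \<or> e i = k + 1"
  shows "Pg p n e \<cong> cyclic_power (p ^ k) (card {i. i < n \<and> e i = k})
                     \<times>\<times> cyclic_power (p ^ (k + 1)) (card {i. i < n \<and> e i \<noteq> k})"
proof -
  define I where "I = {i. i < n \<and> e i = k}"
  define J where "J = {i. i < n \<and> e i \<noteq> k}"
  let ?F = "\<lambda>i. integer_mod_group (p ^ e i)"
  have U: "{..<n} = I \<union> J" and disj: "I \<inter> J = {}" unfolding I_def J_def by auto
  have fin: "finite I" "finite J" unfolding I_def J_def by auto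
  have 1: "Pg p n e \<cong> product_group I ?F \<times>\<times> product_group J ?F"
    unfolding Pg_def U by (rule product_group_union[OF disj])
  have 2: "product_group I ?F = product_group I (\<lambda>_. integer_mod_group (p ^ k))"
    by (rule product_group_cong) (simp add: I_def)
  have 3: "product_group J ?F = product_group J (\<lambda>_. integer_mod_group (p ^ (k + 1)))"
  proof (rule product_group_cong)
    fix i assume "i \<in> J"
    then have "e i = k + 1" using ek unfolding J_def by blast
    then show "integer_mod_group (p ^ e i) = integer_mod_group (p ^ (k + 1))" by simp
  qed
  have 4: "product_group I (\<lambda>_. integer_mod_group (p ^ k)) \<cong> cyclic_power (p ^ k) (card I)"
    unfolding cyclic_power_def by (rule product_const_reindex[OF fin(1)])
  have 5: "product_group J (\<lambda>_. integer_mod_group (p ^ (k + 1))) \<cong> cyclic_power (p ^ (k + 1)) (card J)"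
    unfolding cyclic_power_def by (rule product_const_reindex[OF fin(2)])
  have grp: "group (product_group I ?F)" by simp
  have "product_group I ?F \<times>\<times> product_group J ?F \<cong> cyclic_power (p ^ k) (card I) \<times>\<times> cyclic_power (p ^ (k + 1)) (card J)"
    using group.DirProd_iso_trans[OF grp] 2 3 4 5 by simp
  then show ?thesis using 1 iso_trans unfolding I_def J_def by blast
qed

lemma T_iso_Pg:
  "cyclic_power (p ^ k) \<mu>1 \<times>\<times> cyclic_power (p ^ (k + 1)) \<mu>2
     \<cong> Pg p (\<mu>1 + \<mu>2) (\<lambda>i. if i < \<mu>1 then k else k + 1)"
proof -
  let ?e = "\<lambda>i. if i < \<mu>1 then k else k + 1"
  have c1: "card {i. i < \<mu>1 + \<mu>2 \<and> ?e i = k} = \<mu>1"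
  proof -
    have "{i. i < \<mu>1 + \<mu>2 \<and> ?e i = k} = {..<\<mu>1}" by auto
    then show ?thesis by simp
  qed
  have c2: "card {i. i < \<mu>1 + \<mu>2 \<and> ?e i \<noteq> k} = \<mu>2"
  proof -
    have "{i. i < \<mu>1 + \<mu>2 \<and> ?e i \<noteq> k} = {\<mu>1..<\<mu>1 + \<mu>2}" by auto
    then show ?thesis by simp
  qed
  have "Pg p (\<mu>1 + \<mu>2) ?e \<cong> cyclic_power (p ^ k) \<mu>1 \<times>\<times> cyclic_power (p ^ (k + 1)) \<mu>2"
    using Pg_split[of "\<mu>1 + \<mu>2" ?e k p] c1 c2 by simp
  then show ?thesis using group.iso_sym[OF group_Pg] by blast
qed

lemma chain_T:
  assumes p: "Factorial_Ring.prime p"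
  shows "char_subgroups_chain (cyclic_power (p ^ k) \<mu>1 \<times>\<times> cyclic_power (p ^ (k + 1)) \<mu>2)"
proof -
  let ?e = "\<lambda>i. if i < \<mu>1 then k else k + 1"
  have "char_subgroups_chain (Pg p (\<mu>1 + \<mu>2) ?e)"
    by (rule chain_Pg[OF p]) auto
  moreover have "group (cyclic_power (p ^ k) \<mu>1 \<times>\<times> cyclic_power (p ^ (k + 1)) \<mu>2)"
    unfolding cyclic_power_def by (intro DirProd_group product_group) simp_all
  ultimately show ?thesis using chain_iso[OF _ group_Pg T_iso_Pg] by blast
qed

lemma sg_zero: "sg p n e j 0 = \<one>\<^bsub>Pg p n e\<^esub>"
  unfolding sg_def one_Pg by (intro restrict_ext) simp

lemma nonchain_Pg:
  assumes p: "Factorial_Ring.prime p" and e1: "\<And>i. i < n \<Longrightarrow> e i \<ge> 1"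
    and i0: "i0 < n" and j0: "j0 < n" and gap: "e j0 \<ge> e i0 + 2"
  shows "\<not> char_subgroups_chain (Pg p n e)"
proof
  assume ch: "char_subgroups_chain (Pg p n e)"
  let ?P = "Pg p n e"
  have p0: "p > 0" and p2: "p \<ge> 2" using p prime_gt_0_nat prime_ge_2_nat by auto
  define Om where "Om = {x \<in> carrier ?P. x [^]\<^bsub>?P\<^esub> (p ^ e i0) = \<one>\<^bsub>?P\<^esub>}"
  define Pw where "Pw = (\<lambda>x. x [^]\<^bsub>?P\<^esub> p) ` carrier ?P"
  have c1: "characteristic_subgroup Om ?P" unfolding Om_def by (rule comm_group.char_kernel_pow[OF comm_group_Pg])
  have c2: "characteristic_subgroup Pw ?P" unfolding Pw_def by (rule comm_group.char_image_pow[OF comm_group_Pg])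
  have Ni0: "int p ^ e i0 \<ge> 2"
  proof -
    have "p ^ e i0 \<ge> p ^ 1" using p0 e1[OF i0] by (intro power_increasing) auto
    then have A: "2 \<le> p ^ e i0" using p2 by simp
    have "int 2 \<le> int (p ^ e i0)" using A by (simp only: of_nat_le_iff)
    then show ?thesis by simp
  qed
  let ?d = "sg p n e i0 1"
  have dOm: "?d \<in> Om"
  proof -
    have "?d [^]\<^bsub>?P\<^esub> (p ^ e i0) = sg p n e i0 (int (p ^ e i0) * 1)" by (rule sg_pow[OF p0])
    also have "\<dots> = sg p n e i0 0" by (rule sg_cong) simp
    also have "\<dots> = \<one>\<^bsub>?P\<^esub>" by (rule sg_zero)
    finally show ?thesis unfolding Om_def using sg_carrier[OF p0] by simp
  qed
  have dPw: "?d \<notin> Pw"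
  proof
    assume "?d \<in> Pw"
    then obtain y where y: "y \<in> carrier ?P" "?d = y [^]\<^bsub>?P\<^esub> p" unfolding Pw_def by blast
    have "?d i0 = (int p * y i0) mod int p ^ e i0"
      using y pow_Pg[OF y(1)] i0 by simp
    moreover have "?d i0 = 1" using i0 Ni0 by (simp add: sg_def)
    moreover have "int p dvd (int p * y i0) mod int p ^ e i0"
    proof -
      have "int p dvd int p ^ e i0" using e1[OF i0] by (simp add: dvd_power)
      then show ?thesis by (simp add: dvd_mod)
    qed
    ultimately have "int p dvd 1" by simp
    then show False using p2 by simp
  qed
  let ?z = "sg p n e j0 (int p)"
  have zPw: "?z \<in> Pw"
  proof -
    have "sg p n e j0 1 [^]\<^bsub>?P\<^esub> p = ?z" using sg_pow[OF p0, of n e j0 1 p] by simp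
    then show ?thesis unfolding Pw_def using sg_carrier[OF p0] by (metis image_eqI)
  qed
  have zOm: "?z \<notin> Om"
  proof
    assume "?z \<in> Om"
    then have eq: "?z [^]\<^bsub>?P\<^esub> (p ^ e i0) = \<one>\<^bsub>?P\<^esub>" unfolding Om_def by simp
    have "?z [^]\<^bsub>?P\<^esub> (p ^ e i0) = sg p n e j0 (int (p ^ e i0) * int p)" by (rule sg_pow[OF p0])
    then have "sg p n e j0 (int (p ^ e i0) * int p) = (\<lambda>i\<in>{..<n}. 0)" using eq by (simp add: one_Pg)
    then have "sg p n e j0 (int (p ^ e i0) * int p) j0 = 0" using j0 by simp
    then have "(int p ^ (e i0 + 1)) mod int p ^ e j0 = 0" using j0 by (simp add: sg_def mult.commute)
    moreover have lt: "int p ^ (e i0 + 1) < int p ^ e j0" using p2 gap by (intro power_strict_increasing) auto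
    moreover have gt: "int p ^ (e i0 + 1) > 0" using p0 by simp
    moreover have "(int p ^ (e i0 + 1)) mod int p ^ e j0 = int p ^ (e i0 + 1)"
      using lt gt by (intro mod_pos_pos_trivial) auto
    ultimately show False by linarith
  qed
  have "Om \<subseteq> Pw \<or> Pw \<subseteq> Om" using ch c1 c2 unfolding char_subgroups_chain_def by blast
  then show False using dOm dPw zPw zOm by blast
qed

context comm_group
begin

lemma cyclic_iso_mod:
  assumes g: "g \<in> carrier G" and N0: "ord g > 0"
  shows "integer_mod_group (ord g) \<cong> subgroup_generated G {g}"
proof -
  define N where "N = ord g"
  define f where "f = (\<lambda>c::int. g [^] c)"
  have carr: "carrier (subgroup_generated G {g}) = range (\<lambda>n::int. g [^] n)"
    using carrier_subgroup_generated_by_singleton[OF g] .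
  have cZ: "carrier (integer_mod_group N) = {0..<int N}"
    using N0 by (simp add: N_def carrier_integer_mod_group)
  have modeq: "g [^] (c mod int N) = g [^] c" for c :: int
  proof -
    have "int N dvd c - c mod int N" by (simp add: mod_eq_dvd_iff)
    then show ?thesis unfolding N_def int_pow_eq[OF g] .
  qed
  have hom: "f \<in> hom (integer_mod_group N) (subgroup_generated G {g})"
  proof (rule homI)
    fix c assume "c \<in> carrier (integer_mod_group N)"
    show "f c \<in> carrier (subgroup_generated G {g})" unfolding carr f_def by blast
  next
    fix c d assume "c \<in> carrier (integer_mod_group N)" "d \<in> carrier (integer_mod_group N)"
    have "f ((c + d) mod int N) = g [^] (c + d)" unfolding f_def by (rule modeq)
    also have "\<dots> = f c \<otimes> f d" unfolding f_def by (rule int_pow_mult[OF g])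
    finally show "f (c \<otimes>\<^bsub>integer_mod_group N\<^esub> d) = f c \<otimes>\<^bsub>subgroup_generated G {g}\<^esub> f d" by simp
  qed
  have inj: "inj_on f (carrier (integer_mod_group N))"
  proof (rule inj_onI)
    fix c d assume c: "c \<in> carrier (integer_mod_group N)" and d: "d \<in> carrier (integer_mod_group N)"
      and eq: "f c = f d"
    have "int N dvd d - c" using eq unfolding f_def N_def int_pow_eq[OF g] .
    then have "d mod int N = c mod int N" by (simp add: mod_eq_dvd_iff)
    moreover have "c mod int N = c" "d mod int N = d" using c d cZ by auto
    ultimately show "c = d" by simp
  qed
  have surj: "f ` carrier (integer_mod_group N) = carrier (subgroup_generated G {g})"
  proof
    show "f ` carrier (integer_mod_group N) \<subseteq> carrier (subgroup_generated G {g})"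
      unfolding carr f_def by blast
    show "carrier (subgroup_generated G {g}) \<subseteq> f ` carrier (integer_mod_group N)"
    proof
      fix y assume "y \<in> carrier (subgroup_generated G {g})"
      then obtain c :: int where c: "y = g [^] c" using carr by auto
      have "c mod int N \<in> carrier (integer_mod_group N)" using cZ N0 N_def by simp
      moreover have "f (c mod int N) = y" unfolding f_def using modeq c by simp
      ultimately show "y \<in> f ` carrier (integer_mod_group N)" by (metis image_eqI)
    qed
  qed
  have "f \<in> iso (integer_mod_group N) (subgroup_generated G {g})"
    using hom inj surj by (simp add: iso_iff)
  then show ?thesis unfolding N_def by (rule is_isoI)
qed


lemma exponent_element:
  assumes fin: "finite (carrier G)" and p: "Factorial_Ring.prime p"
    and card: "card (carrier G) = p ^ a" and a1: "a \<ge> 1"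
  shows "\<exists>m g. m \<ge> 1 \<and> g \<in> carrier G \<and> ord g = p ^ m \<and> (\<forall>x\<in>carrier G. x [^] (p ^ m) = \<one>)"
proof -
  have p2: "p \<ge> 2" using p prime_ge_2_nat by blast
  have expo: "\<forall>x\<in>carrier G. x [^] (p ^ a) = \<one>"
    using pow_order_eq_1 card by (simp add: order_def)
  define m where "m = (LEAST m. \<forall>x\<in>carrier G. x [^] (p ^ m) = \<one>)"
  have mex: "\<forall>x\<in>carrier G. x [^] (p ^ m) = \<one>" unfolding m_def by (rule LeastI[of _ a]) (rule expo)
  have m0: "m \<noteq> 0"
  proof
    assume "m = 0"
    then have "\<forall>x\<in>carrier G. x = \<one>" using mex by simp
    then have "carrier G \<subseteq> {\<one>}" by blast
    then have "card (carrier G) \<le> card {\<one>}" by (intro card_mono) auto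
    then have "card (carrier G) \<le> 1" by simp
    moreover have "p ^ a \<ge> p ^ 1" using p2 a1 by (intro power_increasing) auto
    ultimately show False using card p2 by simp
  qed
  have "m - 1 < m" using m0 by simp
  then have "\<not> (\<forall>x\<in>carrier G. x [^] (p ^ (m - 1)) = \<one>)" unfolding m_def by (rule not_less_Least)
  then obtain g where g: "g \<in> carrier G" "g [^] (p ^ (m - 1)) \<noteq> \<one>" by blast
  have "ord g dvd p ^ m" using mex g(1) pow_eq_id by blast
  then obtain j where j: "j \<le> m" "ord g = p ^ j" using divides_primepow_nat[OF p] by blast
  have "j = m"
  proof (rule ccontr)
    assume "j \<noteq> m"
    then have "j \<le> m - 1" using j by simp
    then have "ord g dvd p ^ (m - 1)" using j(2) by (simp add: le_imp_power_dvd)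
    then show False using g pow_eq_id by blast
  qed
  then show ?thesis using m0 g(1) j mex by (intro exI[of _ m] exI[of _ g]) auto
qed


lemma complement_step:
  assumes p: "Factorial_Ring.prime p" and m1: "m \<ge> 1"
    and g: "g \<in> carrier G" and ordg: "ord g = p ^ m"
    and expo: "\<forall>x\<in>carrier G. x [^] (p ^ m) = \<one>"
    and A: "A = range (\<lambda>n::int. g [^] n)"
    and H: "subgroup H G" and AH: "A \<inter> H \<subseteq> {\<one>}"
    and x: "x \<in> carrier G" "x \<notin> A <#> H"
  shows "\<exists>H'. subgroup H' G \<and> A \<inter> H' \<subseteq> {\<one>} \<and> H \<subset> H'"
proof -
  define B where "B = A <#> H"
  have subA: "subgroup A G" unfolding A using subgroup_of_powers[OF g] .
  have subB: "subgroup B G" unfolding B_def using mult_subgroups[OF subA H] .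
  have Ac: "A \<subseteq> carrier G" using subgroup.subset[OF subA] .
  have Hc: "H \<subseteq> carrier G" using subgroup.subset[OF H] .
  have AB: "A \<subseteq> B"
  proof
    fix a assume a: "a \<in> A"
    then have "a \<otimes> \<one> \<in> B" unfolding B_def set_mult_def using subgroup.one_closed[OF H] by blast
    then show "a \<in> B" using a Ac by (simp add: subsetD)
  qed
  have HB: "H \<subseteq> B"
  proof
    fix a assume a: "a \<in> H"
    then have "\<one> \<otimes> a \<in> B" unfolding B_def set_mult_def using subgroup.one_closed[OF subA] by blast
    then show "a \<in> B" using a Hc by (simp add: subsetD)
  qed
  have Bc: "B \<subseteq> carrier G" using subgroup.subset[OF subB] .
  have ex: "\<exists>t. x [^] (p ^ t) \<in> B"
    using expo x(1) subgroup.one_closed[OF subB] by (intro exI[of _ m]) simp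
  define t where "t = (LEAST t. x [^] (p ^ t) \<in> B)"
  have t1: "x [^] (p ^ t) \<in> B" unfolding t_def using LeastI_ex[OF ex] .
  have t0: "t \<noteq> 0"
  proof
    assume "t = 0"
    then have "x [^] (p ^ t) = x" using x(1) by simp
    then show False using t1 x(2) B_def by simp
  qed
  define x' where "x' = x [^] (p ^ (t - 1))"
  have x'c: "x' \<in> carrier G" unfolding x'_def using x(1) by simp
  have x'B: "x' \<notin> B"
  proof -
    have "t - 1 < t" using t0 by simp
    then show ?thesis unfolding x'_def t_def by (rule not_less_Least)
  qed
  have x'p: "x' [^] p \<in> B"
  proof -
    have "x' [^] p = x [^] (p ^ (t - 1) * p)" unfolding x'_def using x(1) by (simp add: nat_pow_pow)
    also have "p ^ (t - 1) * p = p ^ t" using t0 by (cases t) simp_all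
    finally show ?thesis using t1 by simp
  qed
  then obtain r :: int and h where h: "h \<in> H" and xr: "x' [^] p = g [^] r \<otimes> h"
    unfolding B_def set_mult_def A by blast
  have hc: "h \<in> carrier G" using h Hc by blast
  have "x' [^] (p ^ m) = \<one>" using expo x'c by blast
  moreover have "x' [^] (p ^ m) = (x' [^] p) [^] (p ^ (m - 1))"
    using x'c m1 by (simp add: nat_pow_pow power_eq_if)
  ultimately have "(g [^] r \<otimes> h) [^] (p ^ (m - 1)) = \<one>" using xr by simp
  then have "(g [^] r) [^] (p ^ (m - 1)) \<otimes> h [^] (p ^ (m - 1)) = \<one>"
    using g hc by (simp add: pow_mult_distrib m_comm)
  then have eq1: "(g [^] r) [^] (p ^ (m - 1)) = inv (h [^] (p ^ (m - 1)))"
    using g hc by (simp add: inv_equality)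
  have inH: "inv (h [^] (p ^ (m - 1))) \<in> H"
    using h H subgroup_nat_pow_closed[OF H h] subgroup.m_inv_closed[OF H] by blast
  have "(g [^] r) [^] (p ^ (m - 1)) = g [^] (r * int (p ^ (m - 1)))"
    using g by (simp add: int_pow_pow flip: int_pow_int)
  moreover have "g [^] (r * int (p ^ (m - 1))) \<in> A" unfolding A by blast
  ultimately have "g [^] (r * int (p ^ (m - 1))) \<in> A \<inter> H" using eq1 inH by simp
  then have "g [^] (r * int (p ^ (m - 1))) = \<one>" using AH by blast
  then have "int (p ^ m) dvd r * int (p ^ (m - 1))" using int_pow_eq_id[OF g] ordg by simp
  moreover have "int (p ^ m) = int p * int (p ^ (m - 1))" using m1
    by (cases m) simp_all
  ultimately have "int p * int (p ^ (m - 1)) dvd r * int (p ^ (m - 1))" by simp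
  moreover have "int (p ^ (m - 1)) \<noteq> 0" using p prime_gt_0_nat by simp
  moreover have "p > 0" using p prime_gt_0_nat by blast
  ultimately have "int p dvd r" by (simp add: mult.commute)
  then obtain s where rs: "r = int p * s" by (auto simp: dvd_def)
  define y where "y = x' \<otimes> g [^] (- s)"
  have yc: "y \<in> carrier G" unfolding y_def using x'c g by simp
  have yp: "y [^] p = h"
  proof -
    have "y [^] p = x' [^] p \<otimes> (g [^] (- s)) [^] p" unfolding y_def using x'c g by (simp add: pow_mult_distrib m_comm)
    also have "(g [^] (- s)) [^] p = g [^] (- r)"
      using g rs by (simp add: int_pow_pow mult.commute flip: int_pow_int)
    also have "x' [^] p \<otimes> g [^] (- r) = h"
      using xr g hc by (simp add: m_comm m_assoc int_pow_neg[symmetric] int_pow_mult[symmetric] m_lcomm)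
    finally show ?thesis .
  qed
  have ypH: "y [^] p \<in> H" using yp h by simp
  have yB: "y \<notin> B"
  proof
    assume "y \<in> B"
    moreover have "g [^] s \<in> B" using AB unfolding A by blast
    ultimately have "y \<otimes> g [^] s \<in> B" using subgroup.m_closed[OF subB] by blast
    moreover have "y \<otimes> g [^] s = x'" unfolding y_def using x'c g
      by (simp add: m_assoc int_pow_mult[symmetric])
    ultimately show False using x'B by simp
  qed
  define H' where "H' = {h \<otimes> y [^] (j::int) | h j. h \<in> H}"
  have H'c: "H' \<subseteq> carrier G" unfolding H'_def using Hc yc by auto
  have subH': "subgroup H' G"
  proof (rule subgroupI)
    show "H' \<subseteq> carrier G" by (rule H'c)
    show "H' \<noteq> {}" unfolding H'_def using subgroup.one_closed[OF H] by blast
    show "inv a \<in> H'" if aH: "a \<in> H'" for a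
    proof -
      obtain h1 j where a: "a = h1 \<otimes> y [^] (j::int)" "h1 \<in> H" using aH unfolding H'_def by blast
      have "inv a = inv h1 \<otimes> y [^] (- j)" using a Hc yc
        by (simp add: inv_mult int_pow_neg m_comm subsetD)
      moreover have "inv h1 \<in> H" using a subgroup.m_inv_closed[OF H] by blast
      ultimately show ?thesis unfolding H'_def by blast
    qed
    show "a \<otimes> b \<in> H'" if abH: "a \<in> H'" "b \<in> H'" for a b
    proof -
      obtain h1 j1 where a: "a = h1 \<otimes> y [^] (j1::int)" "h1 \<in> H" using abH(1) unfolding H'_def by blast
      obtain h2 j2 where b: "b = h2 \<otimes> y [^] (j2::int)" "h2 \<in> H" using abH(2) unfolding H'_def by blast
      have h12: "h1 \<in> carrier G" "h2 \<in> carrier G" using a b Hc by auto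
      have "a \<otimes> b = (h1 \<otimes> h2) \<otimes> y [^] (j1 + j2)"
        using a b h12 yc by (simp add: int_pow_mult m_ac)
      moreover have "h1 \<otimes> h2 \<in> H" using a b subgroup.m_closed[OF H] by blast
      ultimately show ?thesis unfolding H'_def by blast
    qed
  qed
  have HH': "H \<subseteq> H'"
  proof
    fix h1 assume "h1 \<in> H"
    moreover then have "h1 = h1 \<otimes> y [^] (0::int)" using Hc by auto
    ultimately show "h1 \<in> H'" unfolding H'_def by blast
  qed
  have yH': "y \<in> H'"
  proof -
    have "y = \<one> \<otimes> y [^] (1::int)" using yc by simp
    then show ?thesis unfolding H'_def using subgroup.one_closed[OF H] by blast
  qed
  have yH: "y \<notin> H" using yB HB by blast
  have AH': "A \<inter> H' \<subseteq> {\<one>}"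
  proof
    fix z assume z: "z \<in> A \<inter> H'"
    then obtain h1 j where zj: "z = h1 \<otimes> y [^] (j::int)" "h1 \<in> H" unfolding H'_def by blast
    have h1c: "h1 \<in> carrier G" using zj Hc by blast
    define q0 where "q0 = j div int p"
    define r0 where "r0 = j mod int p"
    have jqr: "j = int p * q0 + r0" unfolding q0_def r0_def by simp
    have yj: "y [^] j = (y [^] p) [^] q0 \<otimes> y [^] r0"
      using yc by (simp add: jqr int_pow_mult int_pow_pow flip: int_pow_int)
    define h2 where "h2 = h1 \<otimes> (y [^] p) [^] q0"
    have h2H: "h2 \<in> H" unfolding h2_def using zj(2) ypH subgroup.m_closed[OF H] subgroup_int_pow_closed[OF H] by blast
    have h2c: "h2 \<in> carrier G" using h2H Hc by blast
    have zh: "z = h2 \<otimes> y [^] r0" unfolding h2_def using zj yj h1c yc by (simp add: m_assoc)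
    show "z \<in> {\<one>}"
    proof (cases "r0 = 0")
      case True
      then have "z = h2" using zh h2c by simp
      then show ?thesis using z h2H AH by blast
    next
      case False
      have pp: "int p > 0" using p prime_gt_0_nat by simp
      have "0 \<le> r0" "r0 < int p" unfolding r0_def using pp by simp_all
      then have r0r: "0 < r0" "r0 < int p" using False by simp_all
      have "y [^] r0 = inv h2 \<otimes> z" using zh h2c yc by (simp add: m_assoc[symmetric])
      moreover have "inv h2 \<otimes> z \<in> B"
      proof -
        have "z \<otimes> inv h2 \<in> B" unfolding B_def set_mult_def
          using z subgroup.m_inv_closed[OF H h2H] by blast
        then show ?thesis using z h2c Ac by (simp add: m_comm subsetD)
      qed
      ultimately have yr0B: "y [^] r0 \<in> B" by simp
      have "\<not> int p dvd r0" using r0r zdvd_not_zless by blast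
      then have "coprime (int p) r0" using p by (intro prime_imp_coprime) simp_all
      then have "gcd r0 (int p) = 1" by (simp add: coprime_commute)
      then obtain u w where uw: "u * r0 + w * int p = 1" using bezout_int[of r0 "int p"] by auto
      have yy: "y = (y [^] r0) [^] u \<otimes> (y [^] p) [^] w"
      proof -
        have "y = y [^] (1::int)" using yc by simp
        also have "\<dots> = y [^] (r0 * u + int p * w)" using uw by (simp add: mult.commute)
        also have "\<dots> = (y [^] r0) [^] u \<otimes> (y [^] p) [^] w"
          using yc by (simp add: int_pow_mult int_pow_pow flip: int_pow_int)
        finally show ?thesis .
      qed
      moreover have "(y [^] r0) [^] u \<in> B" using subgroup_int_pow_closed[OF subB yr0B] .
      moreover have "(y [^] p) [^] w \<in> B" using subgroup_int_pow_closed[OF subB] ypH HB by blast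
      ultimately have XB: "(y [^] r0) [^] u \<otimes> (y [^] p) [^] w \<in> B" using subgroup.m_closed[OF subB] by blast
      have "y \<in> B" by (subst yy) (rule XB)
      then show ?thesis using yB by simp
    qed
  qed
  show ?thesis using subH' AH' HH' yH' yH by blast
qed

end

context comm_group
begin

lemma complement_exists:
  assumes fin: "finite (carrier G)" and p: "Factorial_Ring.prime p" and m1: "m \<ge> 1"
    and g: "g \<in> carrier G" and ordg: "ord g = p ^ m"
    and expo: "\<forall>x\<in>carrier G. x [^] (p ^ m) = \<one>"
    and A: "A = range (\<lambda>n::int. g [^] n)"
  shows "\<exists>H. subgroup H G \<and> A \<inter> H \<subseteq> {\<one>} \<and> A <#> H = carrier G"
proof -
  define S where "S = {H. subgroup H G \<and> A \<inter> H \<subseteq> {\<one>}}"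
  have finS: "finite S"
  proof (rule finite_subset)
    show "S \<subseteq> Pow (carrier G)" unfolding S_def using subgroup.subset by blast
    show "finite (Pow (carrier G))" using fin by simp
  qed
  have oneS: "{\<one>} \<in> S" unfolding S_def using triv_subgroup by blast
  define M where "M = Max (card ` S)"
  have "M \<in> card ` S" unfolding M_def using finS oneS by (intro Max_in) auto
  then obtain H where H: "H \<in> S" "card H = M" by blast
  have maxH: "\<And>H'. H' \<in> S \<Longrightarrow> card H' \<le> card H"
    using H finS M_def by simp
  have subH: "subgroup H G" and AH: "A \<inter> H \<subseteq> {\<one>}" using H(1) unfolding S_def by auto
  have subA: "subgroup A G" unfolding A using subgroup_of_powers[OF g] .
  have "A <#> H = carrier G"
  proof (rule ccontr)
    assume ne: "A <#> H \<noteq> carrier G"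
    have "A <#> H \<subseteq> carrier G"
      using setmult_subset_G subgroup.subset[OF subA] subgroup.subset[OF subH] by blast
    then obtain x where x: "x \<in> carrier G" "x \<notin> A <#> H" using ne by blast
    obtain H' where H': "subgroup H' G" "A \<inter> H' \<subseteq> {\<one>}" "H \<subset> H'"
      using complement_step[OF p m1 g ordg expo A subH AH x] by blast
    have "H' \<in> S" using H' unfolding S_def by blast
    then have "card H' \<le> card H" by (rule maxH)
    moreover have "finite H'" using H'(1) fin subgroup.subset finite_subset by blast
    then have "card H < card H'" using H'(3) by (rule psubset_card_mono)
    ultimately show False by simp
  qed
  then show ?thesis using subH AH by blast
qed

lemma split_off:
  assumes fin: "finite (carrier G)" and p: "Factorial_Ring.prime p"
    and card: "card (carrier G) = p ^ a" and a1: "a \<ge> 1"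
  shows "\<exists>m H. m \<ge> 1 \<and> subgroup H G \<and> G \<cong> integer_mod_group (p ^ m) \<times>\<times> subgroup_generated G H"
proof -
  obtain m g where mg: "m \<ge> 1" "g \<in> carrier G" "ord g = p ^ m" "\<forall>x\<in>carrier G. x [^] (p ^ m) = \<one>"
    using exponent_element[OF fin p card a1] by blast
  define A where "A = range (\<lambda>n::int. g [^] n)"
  obtain H where H: "subgroup H G" "A \<inter> H \<subseteq> {\<one>}" "A <#> H = carrier G"
    using complement_exists[OF fin p mg(1) mg(2) mg(3) mg(4) A_def] by blast
  have subA: "subgroup A G" unfolding A_def using subgroup_of_powers[OF mg(2)] .
  interpret gds: group_disjoint_sum G A H
    by (simp add: group_disjoint_sum_def is_group subA H(1))
  have iso1: "(\<lambda>(x,y). x \<otimes> y) \<in> iso (subgroup_generated G A \<times>\<times> subgroup_generated G H) G"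
    using gds.iso_group_mul[OF comm_group_axioms] H by simp
  have grpD: "group (subgroup_generated G A \<times>\<times> subgroup_generated G H)"
    by (intro DirProd_group) simp_all
  have G1: "G \<cong> subgroup_generated G A \<times>\<times> subgroup_generated G H"
    using group.iso_sym[OF grpD is_isoI[OF iso1]] .
  have eqA: "subgroup_generated G A = subgroup_generated G {g}"
  proof -
    have "carrier (subgroup_generated G A) = carrier (subgroup_generated G {g})"
      using subgroup.carrier_subgroup_generated_subgroup[OF subA]
        carrier_subgroup_generated_by_singleton[OF mg(2)] A_def by simp
    then show ?thesis by (simp add: subgroup_generated_def carrier_subgroup_generated)
  qed
  have "ord g > 0" using mg(3) p prime_gt_0_nat by simp
  then have Z: "integer_mod_group (p ^ m) \<cong> subgroup_generated G {g}"
    using cyclic_iso_mod[OF mg(2)] mg(3) by simp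
  have Z': "subgroup_generated G A \<cong> integer_mod_group (p ^ m)"
    using group.iso_sym[OF group_integer_mod_group Z] eqA by simp
  have "subgroup_generated G A \<times>\<times> subgroup_generated G H \<cong> integer_mod_group (p ^ m) \<times>\<times> subgroup_generated G H"
    using group.DirProd_iso_trans[OF group_subgroup_generated Z' iso_refl] .
  then have "G \<cong> integer_mod_group (p ^ m) \<times>\<times> subgroup_generated G H" using G1 iso_trans by blast
  then show ?thesis using mg(1) H(1) by blast
qed

end

lemma Pg_succ: "integer_mod_group (p ^ m) \<times>\<times> Pg p n e \<cong> Pg p (Suc n) (e(n := m))"
proof -
  let ?F = "\<lambda>i. integer_mod_group (p ^ (e(n := m)) i)"
  have U: "{..<Suc n} = {n} \<union> {..<n}" by auto
  have 1: "Pg p (Suc n) (e(n := m)) \<cong> product_group {n} ?F \<times>\<times> product_group {..<n} ?F"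
    unfolding Pg_def U by (rule product_group_union) simp
  have 2: "product_group {n} ?F \<cong> integer_mod_group (p ^ m)"
    using product_group_singleton[of n ?F] by simp
  have 3: "product_group {..<n} ?F = Pg p n e"
    unfolding Pg_def by (rule product_group_cong) simp
  have grp: "group (product_group {n} ?F)" by simp
  have "product_group {n} ?F \<times>\<times> product_group {..<n} ?F \<cong> integer_mod_group (p ^ m) \<times>\<times> Pg p n e"
    using group.DirProd_iso_trans[OF grp 2 iso_refl] 3 by simp
  then have "Pg p (Suc n) (e(n := m)) \<cong> integer_mod_group (p ^ m) \<times>\<times> Pg p n e"
    using 1 iso_trans by blast
  then show ?thesis using group.iso_sym[OF group_Pg] by blast
qed

lemma trivial_Pg:
  assumes G: "group G" and c: "card (carrier G) = 1"
  shows "G \<cong> Pg p 0 e"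
proof -
  obtain z where z: "carrier G = {z}" using c card_1_singletonE by blast
  then have z1: "carrier G = {\<one>\<^bsub>G\<^esub>}" using group.is_monoid[OF G] monoid.one_closed by fastforce
  have cP: "carrier (Pg p 0 e) = {\<one>\<^bsub>Pg p 0 e\<^esub>}"
    by (auto simp: Pg_def)
  have "group_isomorphisms G (Pg p 0 e) (\<lambda>x. \<one>\<^bsub>Pg p 0 e\<^esub>) (\<lambda>y. \<one>\<^bsub>G\<^esub>)"
    unfolding group_isomorphisms_def hom_def
    using z1 cP group.is_monoid[OF G] group.is_monoid[OF group_Pg]
    by (auto simp: monoid.l_one)
  then show ?thesis using group_isomorphisms_imp_iso is_isoI by blast
qed

lemma card_DirProd_Z:
  assumes "finite (carrier S)" "p > 0"
  shows "card (carrier (integer_mod_group (p ^ m) \<times>\<times> S)) = p ^ m * card (carrier S)"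
proof -
  have "nat (int p ^ m) = p ^ m" by (metis nat_int of_nat_power)
  then show ?thesis using assms by (simp add: DirProd_def carrier_integer_mod_group card_cartesian_product)
qed

lemma structure_thm:
  fixes p :: nat
  assumes p: "Factorial_Ring.prime p"
  shows "\<And>G :: ('a, 'b) monoid_scheme. comm_group G \<Longrightarrow> finite (carrier G) \<Longrightarrow> card (carrier G) = p ^ a
           \<Longrightarrow> \<exists>n e. (\<forall>i<n. e i \<ge> 1) \<and> G \<cong> Pg p n e"
proof (induction a rule: less_induct)
  case (less a)
  note G = less.prems
  show ?case
  proof (cases "a = 0")
    case True
    then have "G \<cong> Pg p 0 (\<lambda>_. 1)" using trivial_Pg[of G] G comm_group.axioms(2) by fastforce
    then show ?thesis by blast
  next
    case False
    then have a1: "a \<ge> 1" by simp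
    interpret comm_group G by (rule G(1))
    obtain m H where mH: "m \<ge> 1" "subgroup H G" "G \<cong> integer_mod_group (p ^ m) \<times>\<times> subgroup_generated G H"
      using split_off[OF G(2) p G(3) a1] by blast
    let ?S = "subgroup_generated G H"
    have cS: "carrier ?S = H" using subgroup.carrier_subgroup_generated_subgroup[OF mH(2)] .
    have finS: "finite (carrier ?S)" using cS mH(2) G(2) subgroup.subset finite_subset by metis
    have commS: "comm_group ?S" by (rule abelian_subgroup_generated[OF G(1)])
    have p0: "p > 0" using p prime_gt_0_nat by blast
    have p1: "p > 1" using p prime_gt_1_nat by blast
    have "p ^ a = p ^ m * card (carrier ?S)"
      using iso_same_card[OF mH(3)] G(3) card_DirProd_Z[OF finS p0] by simp
    then have dvd: "card (carrier ?S) dvd p ^ a" by simp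
    then obtain j where j: "j \<le> a" "card (carrier ?S) = p ^ j" using divides_primepow_nat[OF p] by blast
    have "p ^ a = p ^ (m + j)" using \<open>p ^ a = p ^ m * card (carrier ?S)\<close> j by (simp add: power_add)
    then have "a = m + j" using p1 power_inject_exp by blast
    then have "j < a" using mH(1) by simp
    obtain n e where ne: "\<forall>i<n. e i \<ge> 1" "?S \<cong> Pg p n e"
      using less.IH[OF \<open>j < a\<close> commS finS j(2)] by blast
    have ZS: "integer_mod_group (p ^ m) \<times>\<times> ?S \<cong> integer_mod_group (p ^ m) \<times>\<times> Pg p n e"
      using group.DirProd_iso_trans[OF group_integer_mod_group iso_refl ne(2)] .
    have "G \<cong> Pg p (Suc n) (e(n := m))" using iso_trans[OF iso_trans[OF mH(3) ZS] Pg_succ] .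
    moreover have "\<forall>i<Suc n. (e(n := m)) i \<ge> 1" using ne(1) mH(1) by auto
    ultimately show ?thesis by blast
  qed
qed

context group
begin

lemma elem_prime_order:
  assumes fin: "finite (carrier G)" and q: "Factorial_Ring.prime q" and dv: "q dvd card (carrier G)"
  shows "\<exists>x\<in>carrier G. x \<noteq> \<one> \<and> x [^] q = \<one>"
proof -
  obtain m where m: "card (carrier G) = q * m" using dv by (auto simp: dvd_def)
  have ordG: "order G = q ^ 1 * m" using m by (simp add: order_def)
  obtain K where K: "subgroup K G" "card K = q ^ 1"
    using sylow_thm[OF q is_group ordG fin] by blast
  have q2: "q \<ge> 2" using q prime_ge_2_nat by blast
  have "K \<noteq> {\<one>}"
  proof
    assume "K = {\<one>}"
    then have "card K = 1" by simp
    then show False using K(2) q2 by simp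
  qed
  have "\<exists>x\<in>K. x \<noteq> \<one>"
  proof (rule ccontr)
    assume "\<not> (\<exists>x\<in>K. x \<noteq> \<one>)"
    then have "K \<subseteq> {\<one>}" by auto
    then have "K = {\<one>}" using subgroup.one_closed[OF K(1)] by auto
    then show False using \<open>K \<noteq> {\<one>}\<close> by simp
  qed
  then obtain x where x: "x \<in> K" "x \<noteq> \<one>" by blast
  let ?S = "subgroup_generated G K"
  have cS: "carrier ?S = K" using subgroup.carrier_subgroup_generated_subgroup[OF K(1)] .
  have xS: "x \<in> carrier ?S" using x(1) cS by simp
  have "x [^]\<^bsub>?S\<^esub> order ?S = \<one>\<^bsub>?S\<^esub>"
    by (rule group.pow_order_eq_1[OF group_subgroup_generated xS])
  moreover have "order ?S = q" using K(2) cS by (simp add: order_def)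
  ultimately have "x [^] q = \<one>" by (simp add: pow_subgroup_generated)
  moreover have "x \<in> carrier G" using subgroup.mem_carrier[OF K(1) x(1)] .
  ultimately show ?thesis using x(2) by (intro bexI[of _ x]) simp_all
qed

lemma prime_orders_eq:
  fixes p q c :: nat
  assumes x: "x \<in> carrier G" "x \<noteq> \<one>" "x [^] p = \<one>" "x [^] (q ^ c) = \<one>"
    and p: "Factorial_Ring.prime p" and q: "Factorial_Ring.prime q"
  shows "p = q"
proof -
  have "ord x dvd p" using x pow_eq_id by blast
  moreover have "ord x \<noteq> 1" using x ord_eq_1 by blast
  ultimately have op: "ord x = p" using p prime_nat_iff by blast
  have "ord x dvd q ^ c" using x pow_eq_id by blast
  then have "p dvd q ^ c" using op by simp
  then have "p dvd q" using p prime_dvd_power by blast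
  then show ?thesis using primes_dvd_imp_eq p q by blast
qed

end

lemma (in comm_group) pgroup_of_chain:
  assumes fin: "finite (carrier G)" and ch: "char_subgroups_chain G"
  shows "\<exists>p a. Factorial_Ring.prime p \<and> card (carrier G) = p ^ a"
proof -
  define c where "c = card (carrier G)"
  have c0: "c \<noteq> 0" unfolding c_def using fin one_closed by (auto simp: card_gt_0_iff)
  show ?thesis
  proof (cases "c = 1")
    case True
    then show ?thesis unfolding c_def by (intro exI[of _ 2] exI[of _ 0]) simp
  next
    case False
    obtain p where p: "p dvd c" "Factorial_Ring.prime p" using prime_divisor_exists[of c] c0 False by auto
    have onlyp: "q = p" if q: "Factorial_Ring.prime q" "q dvd c" for q
    proof (rule ccontr)
      assume qp: "q \<noteq> p"
      obtain x where x: "x \<in> carrier G" "x \<noteq> \<one>" "x [^] p = \<one>"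
        using elem_prime_order[OF fin p(2)] p(1) c_def by blast
      obtain y where y: "y \<in> carrier G" "y \<noteq> \<one>" "y [^] q = \<one>"
        using elem_prime_order[OF fin q(1)] q(2) c_def by blast
      define Op where "Op = {z \<in> carrier G. z [^] (p ^ c) = \<one>}"
      define Oq where "Oq = {z \<in> carrier G. z [^] (q ^ c) = \<one>}"
      have cOp: "characteristic_subgroup Op G" unfolding Op_def by (rule char_kernel_pow)
      have cOq: "characteristic_subgroup Oq G" unfolding Oq_def by (rule char_kernel_pow)
      have pw: "z [^] (r ^ c) = \<one>" if "z \<in> carrier G" "z [^] r = \<one>" for z and r :: nat
      proof -
        have "r ^ c = r * r ^ (c - 1)" using c0 by (cases c) simp_all
        then have "z [^] (r ^ c) = (z [^] r) [^] (r ^ (c - 1))" using that(1) by (simp add: nat_pow_pow)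
        then show ?thesis using that(2) by simp
      qed
      have xOp: "x \<in> Op" unfolding Op_def using x pw by blast
      have yOq: "y \<in> Oq" unfolding Oq_def using y pw by blast
      have xOq: "x \<notin> Oq"
      proof
        assume "x \<in> Oq"
        then have "x [^] (q ^ c) = \<one>" unfolding Oq_def by simp
        then have "p = q" using prime_orders_eq[OF x(1) x(2) x(3) _ p(2) q(1)] by blast
        then show False using qp by simp
      qed
      have yOp: "y \<notin> Op"
      proof
        assume "y \<in> Op"
        then have "y [^] (p ^ c) = \<one>" unfolding Op_def by simp
        then have "q = p" using prime_orders_eq[OF y(1) y(2) y(3) _ q(1) p(2)] by blast
        then show False using qp by simp
      qed
      have "Op \<subseteq> Oq \<or> Oq \<subseteq> Op" using ch cOp cOq unfolding char_subgroups_chain_def by blast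
      then show False using xOp xOq yOp yOq by blast
    qed
    have nu: "\<not> is_unit p" using prime_gt_1_nat[OF p(2)] by simp
    obtain y where y: "c = p ^ multiplicity p c * y" "\<not> p dvd y"
      using multiplicity_decompose'[OF c0 nu] by blast
    have "y = 1"
    proof (rule ccontr)
      assume "y \<noteq> 1"
      moreover have "y \<noteq> 0"
      proof
        assume "y = 0" then have "c = 0" using y(1) by simp
        then show False using c0 by simp
      qed
      ultimately obtain q where q: "q dvd y" "Factorial_Ring.prime q" using prime_divisor_exists[of y] by auto
      then have "q dvd p ^ multiplicity p c * y" by simp
      then have "q dvd c" using y(1) by simp
      then have "q = p" using onlyp q(2) by blast
      then show False using q y(2) by simp
    qed
    then show ?thesis using y p(2) unfolding c_def by auto
  qed
qed

theorem mainTheorem9: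
  fixes G :: "('a, 'b) monoid_scheme"
  assumes "comm_group G" and "finite (carrier G)"
  shows "char_subgroups_chain G \<longleftrightarrow>
    (\<exists>(p::nat) k \<mu>1 \<mu>2. Factorial_Ring.prime p \<and>
       G \<cong> (cyclic_power (p ^ k) \<mu>1 \<times>\<times> cyclic_power (p ^ (k + 1)) \<mu>2))"
proof
  have grpG: "group G" using assms(1) comm_group.axioms(2) by blast
  {
    assume ch: "char_subgroups_chain G"
    obtain p a where pa: "Factorial_Ring.prime p" "card (carrier G) = p ^ a"
      using comm_group.pgroup_of_chain[OF assms(1) assms(2) ch] by blast
    obtain n e where ne: "\<forall>i<n. e i \<ge> 1" "G \<cong> Pg p n e"
      using structure_thm[OF pa(1) assms(1) assms(2) pa(2)] by blast
    have chP: "char_subgroups_chain (Pg p n e)"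
      using chain_iso[OF group_Pg grpG group.iso_sym[OF grpG ne(2)] ch] .
    obtain k where ek: "\<And>i. i < n \<Longrightarrow> e i = k \<or> e i = k + 1"
    proof (cases "n = 0")
      case True
      then show ?thesis using that[of 0] by simp
    next
      case False
      define k where "k = Min (e ` {..<n})"
      have "k \<in> e ` {..<n}" unfolding k_def using False by (intro Min_in) auto
      then obtain i0 where i0: "i0 < n" "e i0 = k" by auto
      have kle: "\<And>i. i < n \<Longrightarrow> k \<le> e i" unfolding k_def by simp
      have "e i \<le> k + 1" if i: "i < n" for i
      proof (rule ccontr)
        assume "\<not> e i \<le> k + 1"
        then have "e i \<ge> e i0 + 2" using i0 by simp
        then show False using nonchain_Pg[OF pa(1) _ i0(1) i, of e] ne(1) chP by blast
      qed
      then show ?thesis using that[of k] kle by fastforce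
    qed
    have "Pg p n e \<cong> cyclic_power (p ^ k) (card {i. i < n \<and> e i = k})
                     \<times>\<times> cyclic_power (p ^ (k + 1)) (card {i. i < n \<and> e i \<noteq> k})"
      using Pg_split[OF ek] .
    then have "G \<cong> cyclic_power (p ^ k) (card {i. i < n \<and> e i = k})
                     \<times>\<times> cyclic_power (p ^ (k + 1)) (card {i. i < n \<and> e i \<noteq> k})"
      using iso_trans[OF ne(2)] by blast
    then show "\<exists>(p::nat) k \<mu>1 \<mu>2. Factorial_Ring.prime p \<and>
       G \<cong> (cyclic_power (p ^ k) \<mu>1 \<times>\<times> cyclic_power (p ^ (k + 1)) \<mu>2)"
      using pa(1) by blast
  }
  {
    assume "\<exists>(p::nat) k \<mu>1 \<mu>2. Factorial_Ring.prime p \<and>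
       G \<cong> (cyclic_power (p ^ k) \<mu>1 \<times>\<times> cyclic_power (p ^ (k + 1)) \<mu>2)"
    then obtain p k \<mu>1 \<mu>2 where p: "Factorial_Ring.prime p"
      and iso: "G \<cong> (cyclic_power (p ^ k) \<mu>1 \<times>\<times> cyclic_power (p ^ (k + 1)) \<mu>2)" by blast
    have grpT: "group (cyclic_power (p ^ k) \<mu>1 \<times>\<times> cyclic_power (p ^ (k + 1)) \<mu>2)"
      unfolding cyclic_power_def by (intro DirProd_group product_group) simp_all
    show "char_subgroups_chain G"
      using chain_iso[OF grpG grpT iso chain_T[OF p]] .
  }
qed

end
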